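(* Let $k$ be a complex number and $n$ a positive integer. Then \[ \sum_{\pi \in \mathcal{D}(n)} (-1)^{\#(\pi)-1} s(\pi)^k = \sum_{\pi \in \mathcal{P}(n)} \sum_{j=0}^{\nu_d(\pi)} (-1)^j \binom{\nu_d(\pi)}{j} \bigl(\ell(\pi)-j\bigr)^k, \] where any term with $\ell(\pi)-j=0$ is interpreted as $0$.
   Context: $\mathcal{P}(n)$ is the set of all partitions of $n$ and $\mathcal{D}(n)$ the set of partitions of $n$ into distinct parts. For a partition $\pi$: $s(\pi)$ is its smallest part, $\ell(\pi)$ its largest part, $\#(\pi)$ its number of parts, and $\nu_d(\pi)$ the number of distinct part sizes of $\pi$. For a positive integer $m$ and complex $k$, $m^k=e^{k\log m}$ with the real logarithm. *)

theory Defs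
  imports "HOL-Analysis.Analysis" "HOL-Library.Multiset"
begin

definition partitions :: "nat \<Rightarrow> nat multiset set" where
  "partitions n = {p. (\<forall>x \<in># p. x > 0) \<and> sum_mset p = n}"

definition distinct_partitions :: "nat \<Rightarrow> nat multiset set" where
  "distinct_partitions n = {p \<in> partitions n. \<forall>x. count p x \<le> 1}"

definition smallest_part :: "nat multiset \<Rightarrow> nat" where
  "smallest_part p = Min (set_mset p)"

definition largest_part :: "nat multiset \<Rightarrow> nat" where
  "largest_part p = Max (set_mset p)"

definition num_parts :: "nat multiset \<Rightarrow> nat" where
  "num_parts p = size p"

definition num_distinct_parts :: "nat multiset \<Rightarrow> nat" where
  "num_distinct_parts p = card (set_mset p)"

definition npow :: "nat \<Rightarrow> complex \<Rightarrow> complex" where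
  "npow m k = exp (k * of_real (ln (real m)))"

end

theory Submission
  imports Defs "HOL-Library.Disjoint_Sets"
begin



definition lp :: "nat multiset \<Rightarrow> nat" where
  "lp p = Max (insert 0 (set_mset p))"

definition cnt :: "nat multiset \<Rightarrow> nat \<Rightarrow> nat" where
  "cnt p t = size {#x \<in># p. t \<le> x#}"

definition pconj :: "nat multiset \<Rightarrow> nat multiset" where
  "pconj p = image_mset (cnt p) (mset_set {1..lp p})"

lemma lp_ge: "x \<in># p \<Longrightarrow> x \<le> lp p"
  unfolding lp_def by simp

lemma lp_in: "p \<noteq> {#} \<Longrightarrow> lp p \<in># p"
unfolding lp_def by (metis Max_in finite_insert finite_set_mset insert_iff insert_not_empty Max_ge set_mset_eq_empty_iff le_zero_eq neq0_conv)

lemma lp_empty[simp]: "lp {#} = 0" unfolding lp_def by simp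

lemma cnt_zero: "t > lp p \<Longrightarrow> cnt p t = 0"
  unfolding cnt_def using lp_ge by (force simp: filter_mset_eq_conv)

lemma cnt_mono: "t \<le> t' \<Longrightarrow> cnt p t' \<le> cnt p t"
  unfolding cnt_def by (intro size_mset_mono filter_mset_mono_strong) auto

lemma cnt_split: "cnt p t = count p t + cnt p (Suc t)"
proof -
  have "{#x \<in># p. t \<le> x#} = {#x \<in># p. x = t#} + {#x \<in># p. Suc t \<le> x#}"
    by (induction p) auto
  thus ?thesis unfolding cnt_def by (simp add: filter_eq_replicate_mset)
qed

lemma cnt_1: "\<forall>x\<in>#p. x > 0 \<Longrightarrow> cnt p 1 = size p"
  unfolding cnt_def by (metis One_nat_def Suc_leI filter_mset_True filter_mset_cong)


definition pos :: "nat multiset \<Rightarrow> bool" where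
  "pos p \<longleftrightarrow> (\<forall>x\<in>#p. x > 0)"

lemma set_conj: "set_mset (pconj p) = cnt p ` {1..lp p}"
  unfolding pconj_def by simp

lemma size_conj: "size (pconj p) = lp p"
  unfolding pconj_def by simp

lemma cnt_add: "cnt (add_mset x p) t = cnt p t + (if t \<le> x then 1 else 0)"
  unfolding cnt_def by auto

lemma sum_cnt: "\<forall>x\<in>#p. x \<le> N \<Longrightarrow> (\<Sum>t\<in>{1..N}. cnt p t) = sum_mset p"
proof (induction p)
  case empty
  then show ?case by (simp add: cnt_def)
next
  case (add x p)
  have "(\<Sum>t\<in>{1..N}. cnt (add_mset x p) t) = (\<Sum>t\<in>{1..N}. cnt p t) + (\<Sum>t\<in>{1..N}. (if t \<le> x then 1 else 0))"
    by (simp add: cnt_add sum.distrib)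
  also have "(\<Sum>t\<in>{1..N}. (if t \<le> x then 1 else 0::nat)) = card {t\<in>{1..N}. t \<le> x}"
    by (simp add: sum.If_cases, rule arg_cong[where f=card], auto)
  also have "{t\<in>{1..N}. t \<le> x} = {1..x}" using add.prems by auto
  finally show ?case using add by simp
qed

lemma pos_conj: "pos (pconj p)"
  unfolding pos_def set_conj
proof
  fix y assume "y \<in> cnt p ` {1..lp p}"
  then obtain t where t: "t \<in> {1..lp p}" "y = cnt p t" by auto
  then have "p \<noteq> {#}" by (auto)
  then have "lp p \<in># p" by (rule lp_in)
  then have "count p (lp p) > 0" by simp
  then have "cnt p (lp p) > 0" using cnt_split[of p "lp p"] by simp
  moreover have "cnt p (lp p) \<le> cnt p t" using t by (intro cnt_mono) auto
  ultimately show "y > 0" using t by simp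
qed

lemma sum_conj: "pos p \<Longrightarrow> sum_mset (pconj p) = sum_mset p"
proof -
  have "sum_mset (pconj p) = (\<Sum>t\<in>{1..lp p}. cnt p t)"
    unfolding pconj_def by (simp add: sum_unfold_sum_mset)
  also have "\<dots> = sum_mset p" by (rule sum_cnt) (auto intro: lp_ge)
  finally show ?thesis .
qed

lemma lp_conj: "pos p \<Longrightarrow> lp (pconj p) = size p"
proof (cases "p = {#}")
  case True
  then show ?thesis by (simp add: pconj_def)
next
  case False
  assume "pos p"
  have L: "lp p \<ge> 1" using lp_in[OF False] \<open>pos p\<close> unfolding pos_def
    by (metis One_nat_def Suc_leI)
  have "set_mset (pconj p) = cnt p ` {1..lp p}" by (rule set_conj)
  have "lp (pconj p) = Max (insert 0 (cnt p ` {1..lp p}))" unfolding lp_def set_conj ..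
  also have "\<dots> = cnt p 1"
  proof (rule Max_eqI)
    show "cnt p 1 \<in> insert 0 (cnt p ` {1..lp p})" using L by auto
  qed (auto intro: cnt_mono)
  also have "\<dots> = size p" using \<open>pos p\<close> cnt_1 unfolding pos_def by simp
  finally show ?thesis .
qed


lemma count_image_mset_set: "finite A \<Longrightarrow> count (image_mset g (mset_set A)) v = card {u\<in>A. g u = v}"
  by (simp add: count_image_mset Int_def) (metis (no_types, lifting) Collect_cong vimage_singleton_eq)

lemma cnt_conj: "cnt (pconj p) u = card {t\<in>{1..lp p}. u \<le> cnt p t}"
  unfolding cnt_def pconj_def
  by (simp add: image_mset_filter_mset_swap[symmetric])

lemma downclosed_interval:
  assumes fin: "finite B" and B0: "0 \<notin> B" and dc: "\<And>s t. t \<in> B \<Longrightarrow> 1 \<le> s \<Longrightarrow> s \<le> t \<Longrightarrow> s \<in> B"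
  shows "B = {1..card B}"
proof (cases "B = {}")
  case True then show ?thesis by simp
next
  case False
  define m where "m = Max B"
  have "m \<in> B" using False fin m_def by simp
  have "B = {1..m}"
  proof
    show "B \<subseteq> {1..m}" using B0 fin m_def by (auto simp: Suc_le_eq intro!: Max_ge) (metis neq0_conv)
    show "{1..m} \<subseteq> B" using dc \<open>m \<in> B\<close> by auto
  qed
  then show ?thesis by simp
qed

lemma R_eq:
  assumes "u \<ge> 1" "v \<ge> 1"
  shows "card {t\<in>{1..lp p}. u \<le> cnt p t} = v \<longleftrightarrow> u \<le> cnt p v \<and> \<not> u \<le> cnt p (Suc v)"
proof -
  define B where "B = {t\<in>{1..lp p}. u \<le> cnt p t}"
  have memB: "t \<in> B \<longleftrightarrow> 1 \<le> t \<and> u \<le> cnt p t" for t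
    using cnt_zero[of p t] assms unfolding B_def by (auto simp: not_less[symmetric])
  have "B = {1..card B}"
  proof (rule downclosed_interval)
    show "finite B" unfolding B_def by simp
    show "0 \<notin> B" using memB by simp
    fix s t assume "t \<in> B" "1 \<le> s" "s \<le> t"
    then have "u \<le> cnt p t" "cnt p t \<le> cnt p s" using memB cnt_mono by auto
    then show "s \<in> B" using memB \<open>1 \<le> s\<close> by simp
  qed
  then have "v \<in> B \<longleftrightarrow> v \<le> card B" "Suc v \<in> B \<longleftrightarrow> Suc v \<le> card B"
    using assms by (metis atLeastAtMost_iff, metis atLeastAtMost_iff le_SucI)
  then have "card B = v \<longleftrightarrow> v \<in> B \<and> Suc v \<notin> B"
    using assms by auto
  then show ?thesis using memB assms unfolding B_def[symmetric] by auto
qed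

lemma conj_conj: assumes "pos p" shows "pconj (pconj p) = p"
proof (rule multiset_eqI)
  fix v
  show "count (pconj (pconj p)) v = count p v"
  proof (cases "v = 0")
    case True
    then show ?thesis using pos_conj[of "pconj p"] assms unfolding pos_def
      by (metis count_inI less_irrefl)
  next
    case False
    have "count (pconj (pconj p)) v = card {u\<in>{1..size p}. cnt (pconj p) u = v}"
      unfolding pconj_def[of "pconj p"] lp_conj[OF assms] by (simp add: count_image_mset_set)
    also have "{u\<in>{1..size p}. cnt (pconj p) u = v} = {Suc (cnt p (Suc v))..cnt p v}"
    proof -
      have "cnt p v \<le> size p" using cnt_mono[of 1 v p] cnt_1[of p] assms False unfolding pos_def by simp
      show ?thesis
      proof (rule set_eqI)
        fix u
        show "u \<in> {u\<in>{1..size p}. cnt (pconj p) u = v} \<longleftrightarrow> u \<in> {Suc (cnt p (Suc v))..cnt p v}"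
        proof (cases "u \<ge> 1")
          case True
          then have "cnt (pconj p) u = v \<longleftrightarrow> u \<le> cnt p v \<and> \<not> u \<le> cnt p (Suc v)"
            using R_eq[of u v p] False unfolding cnt_conj by auto
          then show ?thesis using True \<open>cnt p v \<le> size p\<close> by auto
        qed auto
      qed
    qed
    also have "card \<dots> = count p v" using cnt_split[of p v] by simp
    finally show ?thesis .
  qed
qed

lemma nu_conj: assumes "pos p" shows "card (set_mset (pconj p)) = card (set_mset p)"
proof -
  have inj: "inj_on (cnt p) (set_mset p)"
  proof (rule inj_onI)
    have lt: "cnt p y < cnt p x" if "x \<in># p" "x < y" for x y
    proof -
      have "cnt p y \<le> cnt p (Suc x)" using that by (intro cnt_mono) auto
      moreover have "count p x > 0" using that by simp
      ultimately show ?thesis using cnt_split[of p x] by linarith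
    qed
    fix x y assume "x \<in># p" "y \<in># p" "cnt p x = cnt p y"
    then show "x = y" using lt by (metis less_irrefl nat_neq_iff)
  qed
  have img: "cnt p ` {1..lp p} = cnt p ` set_mset p"
  proof
    show "cnt p ` set_mset p \<subseteq> cnt p ` {1..lp p}"
      using assms lp_ge unfolding pos_def by (auto simp: Suc_le_eq)
    show "cnt p ` {1..lp p} \<subseteq> cnt p ` set_mset p"
    proof
      fix y assume "y \<in> cnt p ` {1..lp p}"
      then obtain t where t: "t \<in> {1..lp p}" "y = cnt p t" by auto
      then have "p \<noteq> {#}" by auto
      define C where "C = {x \<in> set_mset p. t \<le> x}"
      have "lp p \<in> C" using lp_in[OF \<open>p \<noteq> {#}\<close>] t unfolding C_def by auto
      define x where "x = Min C"
      have fC: "finite C" unfolding C_def by simp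
      have xC: "x \<in> C" using \<open>lp p \<in> C\<close> fC x_def by (metis Min_in empty_iff)
      have "\<forall>z\<in>#p. (t \<le> z) = (x \<le> z)"
      proof
        fix z assume "z \<in># p"
        show "(t \<le> z) = (x \<le> z)"
        proof
          assume "t \<le> z" then have "z \<in> C" using \<open>z \<in># p\<close> C_def by auto
          then show "x \<le> z" using fC x_def by simp
        next
          assume "x \<le> z" then show "t \<le> z" using xC C_def by auto
        qed
      qed
      then have "cnt p t = cnt p x" unfolding cnt_def by (metis filter_mset_cong)
      then show "y \<in> cnt p ` set_mset p" using t xC C_def by auto
    qed
  qed
  show ?thesis unfolding set_conj img using card_image[OF inj] .
qed



lemma pos_partitions: "partitions n = {p. pos p \<and> sum_mset p = n}"
  unfolding partitions_def pos_def by simp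

lemma elem_le_sum: "x \<in># p \<Longrightarrow> x \<le> sum_mset (p::nat multiset)"
  by (induction p) auto

lemma size_le_sum: "pos p \<Longrightarrow> size p \<le> sum_mset p"
  unfolding pos_def
proof (induction p)
  case empty then show ?case by simp
next
  case (add x p) then show ?case by auto
qed

lemma finite_partitions: "finite (partitions n)"
proof -
  have "partitions n \<subseteq> (\<Union>s\<in>{0..n}. multisets_of_size {1..n} s)"
  proof
    fix p assume "p \<in> partitions n"
    then have p: "pos p" "sum_mset p = n" unfolding pos_partitions by auto
    have "size p \<in> {0..n}" using size_le_sum[OF p(1)] p(2) by simp
    moreover have "set_mset p \<subseteq> {1..n}"
    proof
      fix x assume "x \<in># p"
      then show "x \<in> {1..n}" using elem_le_sum[of x p] p unfolding pos_def
        by (simp add: Suc_le_eq)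
    qed
    ultimately show "p \<in> (\<Union>s\<in>{0..n}. multisets_of_size {1..n} s)"
      by (intro UN_I[of "size p"]) (simp_all add: multisets_of_size_def)
  qed
  moreover have "finite (\<Union>s\<in>{0..n}. multisets_of_size {1..n} s)"
    by (intro finite_UN_I finite_multisets_of_size) auto
  ultimately show ?thesis by (rule finite_subset)
qed

definition Q :: "nat \<Rightarrow> (nat multiset \<times> nat set) set" where
  "Q n = {(\<mu>,S). pos \<mu> \<and> finite S \<and> 0 \<notin> S \<and> sum_mset \<mu> + \<Sum>S = n}"

lemma finite_Q: "finite (Q n)"
proof -
  have "Q n \<subseteq> (\<Union>a\<in>{0..n}. partitions a) \<times> Pow {0..n}"
  proof
    fix x assume "x \<in> Q n"
    then obtain \<mu> S where x: "x = (\<mu>,S)" "pos \<mu>" "finite S" "0 \<notin> S" "sum_mset \<mu> + \<Sum>S = n"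
      unfolding Q_def by auto
    have "S \<subseteq> {0..n}"
    proof
      fix s assume "s \<in> S"
      then have "s \<le> \<Sum>S" using x(3) member_le_sum[of s S "\<lambda>x. x"] by simp
      then show "s \<in> {0..n}" using x(5) by auto
    qed
    moreover have "sum_mset \<mu> \<in> {0..n}" using x(5) by simp
    moreover have "\<mu> \<in> partitions (sum_mset \<mu>)" using x(2) unfolding pos_partitions by simp
    ultimately show "x \<in> (\<Union>a\<in>{0..n}. partitions a) \<times> Pow {0..n}"
      unfolding x(1) by blast
  qed
  moreover have "finite ((\<Union>a\<in>{0..n}. partitions a) \<times> Pow {0..n})"
    using finite_partitions by auto
  ultimately show ?thesis by (rule finite_subset)
qed

lemma binom_subsets:
  fixes h :: "nat \<Rightarrow> complex"
  assumes "finite A"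
  shows "(\<Sum>S\<in>Pow A. h (card S)) = (\<Sum>j=0..card A. of_nat (card A choose j) * h j)"
proof -
  have "(\<Sum>S\<in>Pow A. h (card S)) = (\<Sum>j\<in>{0..card A}. \<Sum>S\<in>{S\<in>Pow A. card S = j}. h (card S))"
  proof (rule sum.group[symmetric])
    show "finite (Pow A)" using assms by simp
    show "finite {0..card A}" by simp
    show "card ` Pow A \<subseteq> {0..card A}" using assms card_mono by fastforce
  qed
  also have "\<dots> = (\<Sum>j=0..card A. of_nat (card A choose j) * h j)"
  proof (rule sum.cong)
    fix j assume "j \<in> {0..card A}"
    have "(\<Sum>S\<in>{S\<in>Pow A. card S = j}. h (card S)) = (\<Sum>S\<in>{S\<in>Pow A. card S = j}. h j)" by simp
    also have "\<dots> = of_nat (card {S\<in>Pow A. card S = j}) * h j" by simp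
    also have "{S\<in>Pow A. card S = j} = {S. S \<subseteq> A \<and> card S = j}" by auto
    finally show "(\<Sum>S\<in>{S\<in>Pow A. card S = j}. h (card S)) = of_nat (card A choose j) * h j"
      using n_subsets[OF assms] by simp
  qed simp
  finally show ?thesis .
qed

lemma bij_pconj: "bij_betw pconj (partitions n) (partitions n)"
proof (rule bij_betw_byWitness[where f'=pconj])
  show "\<forall>a\<in>partitions n. pconj (pconj a) = a" unfolding pos_partitions using conj_conj by blast
  show "\<forall>a\<in>partitions n. pconj (pconj a) = a" unfolding pos_partitions using conj_conj by blast
  show "pconj ` partitions n \<subseteq> partitions n" unfolding pos_partitions using pos_conj sum_conj by blast
  show "pconj ` partitions n \<subseteq> partitions n" unfolding pos_partitions using pos_conj sum_conj by blast
qed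



lemma lp_largest: "p \<noteq> {#} \<Longrightarrow> largest_part p = lp p"
  unfolding largest_part_def lp_def
  by (metis Max_insert finite_set_mset max_0L set_mset_eq_empty_iff)

lemma card_set_le_lp: "pos p \<Longrightarrow> card (set_mset p) \<le> lp p"
proof -
  assume "pos p"
  then have "set_mset p \<subseteq> {1..lp p}" using lp_ge unfolding pos_def by (auto simp: Suc_le_eq)
  then show ?thesis by (metis card_atLeastAtMost card_mono finite_atLeastAtMost diff_Suc_1)
qed

lemma msubset_of_subset: "S \<subseteq> set_mset p \<Longrightarrow> mset_set S \<subseteq># p"
  by (meson finite_set_mset mset_set_set_mset_msubset subset_imp_msubset_mset_set subset_mset.order_trans)

lemma sum_mset_set: "finite S \<Longrightarrow> sum_mset (mset_set S) = (\<Sum>S::nat)"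
  by (simp add: sum_unfold_sum_mset)

context
  fixes F :: "nat \<Rightarrow> complex"
begin

definition W :: "nat \<Rightarrow> nat \<Rightarrow> complex" where
  "W a b = (\<Sum>j=0..b. of_nat (b choose j) * ((-1)^j * F (a - j)))"

lemma W_subsets: "W a (card (set_mset p)) = (\<Sum>S\<in>Pow (set_mset p). (-1)^card S * F (a - card S))"
  unfolding W_def by (rule binom_subsets[symmetric]) simp

lemma step_conj1:
  "(\<Sum>p\<in>partitions n. W (lp p) (card (set_mset p))) = (\<Sum>p\<in>partitions n. W (size p) (card (set_mset p)))"
proof -
  have "(\<Sum>p\<in>partitions n. W (lp p) (card (set_mset p))) =
        (\<Sum>p\<in>partitions n. W (lp (pconj p)) (card (set_mset (pconj p))))"
    using sum.reindex_bij_betw[OF bij_pconj, of "\<lambda>p. W (lp p) (card (set_mset p))" n] by simp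
  also have "\<dots> = (\<Sum>p\<in>partitions n. W (size p) (card (set_mset p)))"
    by (rule sum.cong) (auto simp: pos_partitions lp_conj nu_conj)
  finally show ?thesis .
qed

lemma step_split:
  "(\<Sum>p\<in>partitions n. \<Sum>S\<in>Pow (set_mset p). (-1)^card S * F (size p - card S))
   = (\<Sum>(\<mu>,S)\<in>Q n. (-1)^card S * F (size \<mu>))"
proof -
  have "(\<Sum>p\<in>partitions n. \<Sum>S\<in>Pow (set_mset p). (-1)^card S * F (size p - card S))
     = (\<Sum>(p,S)\<in>Sigma (partitions n) (\<lambda>p. Pow (set_mset p)). (-1)^card S * F (size p - card S))"
    by (rule sum.Sigma) (auto simp: finite_partitions)
  also have "\<dots> = (\<Sum>(\<mu>,S)\<in>Q n. (-1)^card S * F (size \<mu>))"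
  proof (rule sum.reindex_bij_witness[where j = "\<lambda>(p,S). (p - mset_set S, S)"
                                       and i = "\<lambda>(\<mu>,S). (\<mu> + mset_set S, S)"])
    fix a assume a: "a \<in> Sigma (partitions n) (\<lambda>p. Pow (set_mset p))"
    obtain p S where pS: "a = (p,S)" by (cases a)
    with a have p: "pos p" "sum_mset p = n" and S: "S \<subseteq> set_mset p" unfolding pos_partitions by auto
    have fS: "finite S" using S finite_subset by blast
    have sub: "mset_set S \<subseteq># p" using S by (rule msubset_of_subset)
    have eq: "p - mset_set S + mset_set S = p" using sub by (simp add: subset_mset.diff_add)
    show "(\<lambda>(\<mu>,S). (\<mu> + mset_set S, S)) ((\<lambda>(p,S). (p - mset_set S, S)) a) = a"
      using pS eq by simp
    have "0 \<notin> S" using S p(1) unfolding pos_def by auto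
    moreover have "pos (p - mset_set S)" using p(1) unfolding pos_def by (auto dest: in_diffD)
    moreover have "sum_mset (p - mset_set S) + \<Sum>S = n"
    proof -
      have "sum_mset (p - mset_set S + mset_set S) = n" using eq p(2) by simp
      then show ?thesis unfolding sum_mset.union sum_mset_set[OF fS] .
    qed
    ultimately show "(\<lambda>(p,S). (p - mset_set S, S)) a \<in> Q n" using pS fS unfolding Q_def by simp
    have "size (p - mset_set S) = size p - card S"
      using sub by (simp add: size_Diff_submset)
    then show "(case (\<lambda>(p,S). (p - mset_set S, S)) a of (\<mu>,S) \<Rightarrow> (-1)^card S * F (size \<mu>)) =
               (case a of (p,S) \<Rightarrow> (-1)^card S * F (size p - card S))" using pS by simp
  next
    fix b assume b: "b \<in> Q n"
    obtain \<mu> S where mS: "b = (\<mu>,S)" by (cases b)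
    with b have m: "pos \<mu>" "finite S" "0 \<notin> S" "sum_mset \<mu> + \<Sum>S = n" unfolding Q_def by auto
    show "(\<lambda>(p,S). (p - mset_set S, S)) ((\<lambda>(\<mu>,S). (\<mu> + mset_set S, S)) b) = b" using mS by simp
    have "pos (\<mu> + mset_set S)" using m unfolding pos_def by (metis gr0I union_iff elem_mset_set)
    moreover have "sum_mset (\<mu> + mset_set S) = n" using m sum_mset_set by simp
    moreover have "S \<subseteq> set_mset (\<mu> + mset_set S)" using m by auto
    ultimately show "(\<lambda>(\<mu>,S). (\<mu> + mset_set S, S)) b \<in> Sigma (partitions n) (\<lambda>p. Pow (set_mset p))"
      using mS unfolding pos_partitions by simp
  qed
  finally show ?thesis .
qed

lemma step_conj2:
  "(\<Sum>(\<mu>,S)\<in>Q n. (-1)^card S * F (size \<mu>)) = (\<Sum>(q,S)\<in>Q n. (-1)^card S * F (lp q))"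
proof (rule sum.reindex_bij_witness[where j = "\<lambda>(\<mu>,S). (pconj \<mu>, S)" and i = "\<lambda>(\<mu>,S). (pconj \<mu>, S)"])
  fix a assume a: "a \<in> Q n"
  obtain \<mu> S where mS: "a = (\<mu>,S)" by (cases a)
  with a have m: "pos \<mu>" "finite S" "0 \<notin> S" "sum_mset \<mu> + \<Sum>S = n" unfolding Q_def by auto
  show "(\<lambda>(\<mu>,S). (pconj \<mu>, S)) ((\<lambda>(\<mu>,S). (pconj \<mu>, S)) a) = a" using mS m conj_conj by simp
  show "(\<lambda>(\<mu>,S). (pconj \<mu>, S)) a \<in> Q n" using mS m pos_conj sum_conj unfolding Q_def by simp
  show "(case (\<lambda>(\<mu>,S). (pconj \<mu>, S)) a of (q,S) \<Rightarrow> (-1)^card S * F (lp q)) =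
        (case a of (\<mu>,S) \<Rightarrow> (-1)^card S * F (size \<mu>))" using mS m lp_conj by simp
next
  fix a assume a: "a \<in> Q n"
  obtain \<mu> S where mS: "a = (\<mu>,S)" by (cases a)
  with a have m: "pos \<mu>" "finite S" "0 \<notin> S" "sum_mset \<mu> + \<Sum>S = n" unfolding Q_def by auto
  show "(\<lambda>(\<mu>,S). (pconj \<mu>, S)) ((\<lambda>(\<mu>,S). (pconj \<mu>, S)) a) = a" using mS m conj_conj by simp
  show "(\<lambda>(\<mu>,S). (pconj \<mu>, S)) a \<in> Q n" using mS m pos_conj sum_conj unfolding Q_def by simp
qed

end



definition cand :: "nat multiset \<Rightarrow> nat set \<Rightarrow> nat set" where
  "cand q S = {i. (i \<in> S \<and> i \<le> lp q) \<or> (i \<in># q \<and> i < lp q) \<or> (i = lp q \<and> 2 \<le> count q i)}"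

definition tog :: "nat multiset \<times> nat set \<Rightarrow> nat multiset \<times> nat set" where
  "tog x = (let q = fst x; S = snd x; i = Min (cand q S) in
     if i \<in> S then (add_mset i q, S - {i}) else (q - {#i#}, insert i S))"

lemma finite_cand: "finite (cand q S)"
  by (rule finite_subset[of _ "{..lp q}"]) (auto simp: cand_def)

lemma lp_eqI: "m \<in># r \<Longrightarrow> (\<forall>x\<in>#r. x \<le> m) \<Longrightarrow> lp r = m"
  unfolding lp_def by (intro Max_eqI) auto

lemma Min_transfer:
  assumes "finite C'" "i \<in> C'" "\<forall>j\<in>C'. j < i \<longrightarrow> j \<in> C" "finite C" "i = Min C"
  shows "Min C' = i"
proof (rule Min_eqI)
  show "finite C'" "i \<in> C'" by fact+
  fix j assume "j \<in> C'"
  show "i \<le> j"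
  proof (rule ccontr)
    assume "\<not> i \<le> j"
    then have "j \<in> C" using assms \<open>j \<in> C'\<close> by auto
    then have "Min C \<le> j" using assms(4) by simp
    then show False using \<open>\<not> i \<le> j\<close> assms(5) by simp
  qed
qed

lemma tog_props:
  assumes Q: "(q,S) \<in> Q n" and ne: "q \<noteq> {#}" and cne: "cand q S \<noteq> {}"
  defines "i \<equiv> Min (cand q S)"
  obtains q' S' where "tog (q,S) = (q',S')" "(q',S') \<in> Q n" "q' \<noteq> {#}" "lp q' = lp q"
    "cand q' S' \<noteq> {}" "tog (q',S') = (q,S)" "(i \<in> S) \<noteq> (i \<in> S')"
    "(-1::complex)^card S' = - ((-1)^card S)"
proof -
  from Q have m: "pos q" "finite S" "0 \<notin> S" "sum_mset q + \<Sum>S = n" unfolding Q_def by auto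
  have iC: "i \<in> cand q S" unfolding i_def using finite_cand cne by (rule Min_in)
  have lpq: "lp q \<in># q" using lp_in[OF ne] .
  have lt: "\<forall>j\<in>C'. j < i \<longrightarrow> j \<in> cand q S \<Longrightarrow> i \<in> C' \<Longrightarrow> finite C' \<Longrightarrow> Min C' = i" for C'
    using Min_transfer[of C' i "cand q S"] finite_cand i_def by blast
  show ?thesis
  proof (cases "i \<in> S")
    case True
    define q' where "q' = add_mset i q"
    define S' where "S' = S - {i}"
    have ile: "i \<le> lp q" using iC True lp_ge unfolding cand_def by auto
    have lp': "lp q' = lp q" unfolding q'_def using ile lpq lp_ge by (intro lp_eqI) auto
    have ipos: "i > 0" using True m(3) by (cases i) auto
    have Q': "(q',S') \<in> Q n"
    proof -
      have "\<Sum>S = i + \<Sum>S'" unfolding S'_def using True m(2) by (simp add: sum.remove)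
      then show ?thesis using m ipos unfolding Q_def q'_def S'_def pos_def by auto
    qed
    have iC': "i \<in> cand q' S'"
    proof (cases "i < lp q")
      case True then show ?thesis unfolding cand_def q'_def using lp' q'_def by auto
    next
      case False
      then have "i = lp q" using ile by simp
      then have "2 \<le> count q' i" using lpq unfolding q'_def by simp
      then show ?thesis unfolding cand_def using lp' \<open>i = lp q\<close> by auto
    qed
    have sub: "\<forall>j\<in>cand q' S'. j < i \<longrightarrow> j \<in> cand q S"
      unfolding cand_def lp' unfolding q'_def S'_def by auto
    have Min': "Min (cand q' S') = i" using lt[OF sub iC' finite_cand] .
    have i': "i \<notin> S'" unfolding S'_def by simp
    have tog1: "tog (q,S) = (q',S')" using True unfolding tog_def Let_def q'_def S'_def by (simp add: i_def)
    have tog2: "tog (q',S') = (q,S)" unfolding tog_def Let_def using Min' i' True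
      unfolding q'_def S'_def by (simp add: insert_absorb)
    have "card S = Suc (card S')" unfolding S'_def using True m(2) by (metis card_Suc_Diff1)
    then have sg: "(-1::complex)^card S' = - ((-1)^card S)" by simp
    show ?thesis
      by (rule that[OF tog1 Q' _ lp' _ tog2]) (use iC' sg True i' q'_def in auto)
  next
    case False
    define q' where "q' = q - {#i#}"
    define S' where "S' = insert i S"
    have disj: "(i \<in># q \<and> i < lp q) \<or> (i = lp q \<and> 2 \<le> count q i)"
      using iC False unfolding cand_def by auto
    have "i \<in># q \<and> lp q \<in># q'"
      using disj
    proof
      assume a: "i \<in># q \<and> i < lp q"
      then have "count {#i#} (lp q) = 0" by simp
      moreover have "count q (lp q) > 0" using lpq by simp
      ultimately show ?thesis using a unfolding q'_def in_diff_count by linarith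
    next
      assume a: "i = lp q \<and> 2 \<le> count q i"
      then have ii: "i = lp q" and c2: "2 \<le> count q (lp q)" by auto
      have "count {#i#} (lp q) = 1" using ii by simp
      then show ?thesis unfolding q'_def in_diff_count using c2 ii lpq by simp
    qed
    then have iq: "i \<in># q" and lpin: "lp q \<in># q'" by auto
    have lp': "lp q' = lp q"
    proof (rule lp_eqI[OF lpin])
      show "\<forall>x\<in>#q'. x \<le> lp q"
      proof
        fix x assume "x \<in># q'"
        then have "x \<in># q" unfolding q'_def by (rule in_diffD)
        then show "x \<le> lp q" by (rule lp_ge)
      qed
    qed
    have ipos: "i > 0" using iq m(1) unfolding pos_def by auto
    have Q': "(q',S') \<in> Q n"
    proof -
      have "q = add_mset i q'" unfolding q'_def using iq by simp
      then have s1: "sum_mset q = i + sum_mset q'" by simp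
      have s2: "\<Sum>S' = i + \<Sum>S" unfolding S'_def using False m(2) by simp
      have pq: "pos q'" unfolding pos_def
      proof
        fix x assume "x \<in># q'"
        then have "x \<in># q" unfolding q'_def by (rule in_diffD)
        then show "x > 0" using m(1) unfolding pos_def by blast
      qed
      have "finite S'" "0 \<notin> S'" using m(2,3) ipos unfolding S'_def by auto
      moreover have "sum_mset q' + \<Sum>S' = n" using s1 s2 m(4) by linarith
      ultimately show ?thesis using pq unfolding Q_def by simp
    qed
    have ile: "i \<le> lp q" using iq lp_ge by auto
    have iC': "i \<in> cand q' S'" unfolding cand_def S'_def using lp' ile by auto
    have sub: "\<forall>j\<in>cand q' S'. j < i \<longrightarrow> j \<in> cand q S"
    proof (intro ballI impI)
      fix j assume j: "j \<in> cand q' S'" "j < i"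
      have "count q' j \<le> count q j" unfolding q'_def by simp
      moreover have "j \<in># q' \<Longrightarrow> j \<in># q" unfolding q'_def by (rule in_diffD)
      ultimately show "j \<in> cand q S" using j unfolding cand_def lp' S'_def by auto
    qed
    have Min': "Min (cand q' S') = i" using lt[OF sub iC' finite_cand] .
    have i': "i \<in> S'" unfolding S'_def by simp
    have tog1: "tog (q,S) = (q',S')" using False unfolding tog_def Let_def q'_def S'_def by (simp add: i_def)
    have tog2: "tog (q',S') = (q,S)" unfolding tog_def Let_def using Min' i' False iq
      unfolding q'_def S'_def by simp
    have "card S' = Suc (card S)" unfolding S'_def using False m(2) by simp
    then have sg: "(-1::complex)^card S' = - ((-1)^card S)" by simp
    have "q' \<noteq> {#}" using lpin by auto
    show ?thesis
      by (rule that[OF tog1 Q' \<open>q' \<noteq> {#}\<close> lp' _ tog2]) (use iC' sg False i' in auto)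
  qed
qed


lemma involution_sum:
  fixes F :: "nat \<Rightarrow> complex"
  shows "(\<Sum>x\<in>{x\<in>Q n. fst x \<noteq> {#} \<and> cand (fst x) (snd x) \<noteq> {}}. (-1)^card (snd x) * F (lp (fst x))) = 0"
proof (rule sum_involution_eq_0[where h = tog])
  fix x assume x: "x \<in> {x\<in>Q n. fst x \<noteq> {#} \<and> cand (fst x) (snd x) \<noteq> {}}"
  obtain q S where qS: "x = (q,S)" by (cases x)
  have a: "(q,S) \<in> Q n" "q \<noteq> {#}" "cand q S \<noteq> {}" using x qS by auto
  obtain q' S' where o: "tog (q,S) = (q',S')" "(q',S') \<in> Q n" "q' \<noteq> {#}" "lp q' = lp q"
    "cand q' S' \<noteq> {}" "tog (q',S') = (q,S)" "(Min (cand q S) \<in> S) \<noteq> (Min (cand q S) \<in> S')"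
    "(-1::complex)^card S' = - ((-1)^card S)"
    by (rule tog_props[OF a])
  show "(-1)^card (snd (tog x)) * F (lp (fst (tog x))) + (-1)^card (snd x) * F (lp (fst x)) = 0"
    using o qS by simp
  show "tog x \<in> {x\<in>Q n. fst x \<noteq> {#} \<and> cand (fst x) (snd x) \<noteq> {}}" using o qS by simp
  show "tog (tog x) = x" using o qS by simp
  show "tog x \<noteq> x" using o qS by auto
qed

lemma fixed_shape:
  assumes "pos q" "q \<noteq> {#}" "cand q S = {}"
  shows "q = {#lp q#}" "\<forall>s\<in>S. lp q < s"
proof -
  have lpq: "lp q \<in># q" using lp_in[OF assms(2)] .
  have "lp q \<notin> cand q S" using assms(3) by simp
  then have c: "count q (lp q) < 2" unfolding cand_def by simp
  have other: "\<forall>x\<in>#q. x = lp q"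
  proof
    fix x assume "x \<in># q"
    then have "x \<le> lp q" by (rule lp_ge)
    moreover have "x \<notin> cand q S" using assms(3) by simp
    then have "\<not> x < lp q" using \<open>x \<in># q\<close> unfolding cand_def by simp
    ultimately show "x = lp q" by simp
  qed
  show "q = {#lp q#}"
  proof (rule multiset_eqI)
    fix x
    show "count q x = count {#lp q#} x"
    proof (cases "x = lp q")
      case True
      have "count q (lp q) > 0" using lpq by simp
      moreover have "count {#lp q#} x = 1" "count q x = count q (lp q)" using True by simp_all
      ultimately show ?thesis using c by linarith
    next
      case False
      then have "x \<notin># q" using other by auto
      then show ?thesis using False by (simp add: not_in_iff)
    qed
  qed
  show "\<forall>s\<in>S. lp q < s"
  proof
    fix s assume "s \<in> S"
    moreover have "s \<notin> cand q S" using assms(3) by simp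
    ultimately show "lp q < s" unfolding cand_def by simp
  qed
qed

lemma distinct_eq_mset_set: "(\<forall>x. count T x \<le> 1) \<Longrightarrow> T = mset_set (set_mset T)"
proof (rule multiset_eqI)
  fix x assume d: "\<forall>x. count T x \<le> 1"
  have e: "count (mset_set (set_mset T)) x = (if x \<in># T then 1 else 0)" by (simp add: count_mset_set')
  have le: "count T x \<le> 1" using d by blast
  show "count T x = count (mset_set (set_mset T)) x"
  proof (cases "x \<in># T")
    case True
    then have "count T x > 0" by simp
    moreover have "count (mset_set (set_mset T)) x = 1" using e True by simp
    ultimately show ?thesis using le by linarith
  next
    case False
    then show ?thesis using e by (simp add: not_in_iff)
  qed
qed

lemma fixed_sum:
  fixes F :: "nat \<Rightarrow> complex"
  assumes "n > 0"
  shows "(\<Sum>x\<in>{x\<in>Q n. fst x \<noteq> {#} \<and> cand (fst x) (snd x) = {}}. (-1)^card (snd x) * F (lp (fst x)))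
       = (\<Sum>T\<in>distinct_partitions n. (-1)^(size T - 1) * F (Min (set_mset T)))"
proof (rule sum.reindex_bij_witness[where j = "\<lambda>x. fst x + mset_set (snd x)"
      and i = "\<lambda>T. ({#Min (set_mset T)#}, set_mset T - {Min (set_mset T)})"])
  fix x assume x: "x \<in> {x\<in>Q n. fst x \<noteq> {#} \<and> cand (fst x) (snd x) = {}}"
  obtain q S where qS: "x = (q,S)" by (cases x)
  have m: "pos q" "finite S" "0 \<notin> S" "sum_mset q + \<Sum>S = n" "q \<noteq> {#}" "cand q S = {}"
    using x qS unfolding Q_def by auto
  define m0 where "m0 = lp q"
  have qeq: "q = {#m0#}" and gt: "\<forall>s\<in>S. m0 < s" using fixed_shape[OF m(1,5,6)] m0_def by auto
  have m0S: "m0 \<notin> S" using gt by auto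
  have T: "fst x + mset_set (snd x) = add_mset m0 (mset_set S)" using qS qeq by simp
  have setT: "set_mset (add_mset m0 (mset_set S)) = insert m0 S" using m(2) by simp
  have minT: "Min (insert m0 S) = m0"
    using gt m(2) by (intro Min_eqI) (auto simp: less_imp_le)
  show "({#Min (set_mset (fst x + mset_set (snd x)))#},
         set_mset (fst x + mset_set (snd x)) - {Min (set_mset (fst x + mset_set (snd x)))}) = x"
    unfolding T setT minT using qS qeq m0S by simp
  have m0pos: "m0 > 0" using m(1) qeq unfolding pos_def by simp
  have "pos (add_mset m0 (mset_set S))" unfolding pos_def
  proof
    fix y assume "y \<in># add_mset m0 (mset_set S)"
    then have "y = m0 \<or> y \<in> S" using m(2) by simp
    then show "y > 0" using m0pos m(3) by (metis gr0I)
  qed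
  moreover have "sum_mset (add_mset m0 (mset_set S)) = n" using m(4) qeq m(2) sum_mset_set by simp
  moreover have "count (add_mset m0 (mset_set S)) y \<le> 1" for y using m0S m(2) by (auto simp: count_mset_set')
  ultimately show "fst x + mset_set (snd x) \<in> distinct_partitions n"
    unfolding T distinct_partitions_def pos_partitions by auto
  have "size (add_mset m0 (mset_set S)) - 1 = card S" by simp
  moreover have "lp q = m0" using m0_def by simp
  ultimately show "(-1)^(size (fst x + mset_set (snd x)) - 1) * F (Min (set_mset (fst x + mset_set (snd x))))
      = (-1)^card (snd x) * F (lp (fst x))"
    unfolding T setT minT using qS by simp
next
  fix T assume T: "T \<in> distinct_partitions n"
  then have p: "pos T" "sum_mset T = n" and d: "\<forall>x. count T x \<le> 1"
    unfolding distinct_partitions_def pos_partitions by auto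
  have ne: "T \<noteq> {#}" using p(2) assms by auto
  define m0 where "m0 = Min (set_mset T)"
  define S where "S = set_mset T - {m0}"
  have m0T: "m0 \<in># T" unfolding m0_def using ne by (simp add: Min_in)
  have fS: "finite S" unfolding S_def by simp
  have m0S: "m0 \<notin> S" unfolding S_def by simp
  have Teq: "T = add_mset m0 (mset_set S)"
  proof -
    have "set_mset T = insert m0 S" unfolding S_def using m0T by auto
    then show ?thesis using distinct_eq_mset_set[OF d] fS m0S by simp
  qed
  show "fst ({#m0#}, S) + mset_set (snd ({#m0#}, S)) = T" using Teq by simp
  have m0pos: "m0 > 0" using p(1) m0T unfolding pos_def by simp
  have gt: "\<forall>s\<in>S. m0 < s"
  proof
    fix s assume "s \<in> S"
    then have "s \<in># T" "s \<noteq> m0" unfolding S_def by auto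
    then have "m0 \<le> s" unfolding m0_def by simp
    then show "m0 < s" using \<open>s \<noteq> m0\<close> by simp
  qed
  have lpm: "lp {#m0#} = m0" by (rule lp_eqI) simp_all
  have "0 \<notin> S" using gt by auto
  moreover have "pos {#m0#}" using m0pos unfolding pos_def by simp
  moreover have "sum_mset {#m0#} + \<Sum>S = n"
  proof -
    have "sum_mset (add_mset m0 (mset_set S)) = n" using Teq p(2) by simp
    then show ?thesis using sum_mset_set[OF fS] by simp
  qed
  moreover have "cand {#m0#} S = {}"
  proof -
    have "\<not> (i \<in> S \<and> i \<le> m0)" for i using gt by (meson leD)
    then show ?thesis unfolding cand_def lpm by auto
  qed
  ultimately show "({#m0#}, S) \<in> {x\<in>Q n. fst x \<noteq> {#} \<and> cand (fst x) (snd x) = {}}"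
    unfolding Q_def using fS by simp
qed


theorem corollary2p4:
  fixes k :: complex and n :: nat
  assumes "n > 0"
  shows "(\<Sum>p\<in>distinct_partitions n. (-1) ^ (num_parts p - 1) * npow (smallest_part p) k)
       = (\<Sum>p\<in>partitions n. \<Sum>j=0..num_distinct_parts p.
            (-1) ^ j * of_nat (num_distinct_parts p choose j) *
            (if int (largest_part p) - int j = 0 then 0
             else npow (nat (int (largest_part p) - int j)) k))"
proof -
  define F where "F x = (if x = 0 then 0 else npow x k)" for x
  define g where "g x = (-1)^card (snd x) * F (lp (fst x))" for x :: "nat multiset \<times> nat set"
  define X where "X = {x. fst x \<noteq> {#} \<and> cand (fst x) (snd x) \<noteq> {}}"
  have L: "(\<Sum>p\<in>distinct_partitions n. (-1) ^ (num_parts p - 1) * npow (smallest_part p) k)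
        = (\<Sum>T\<in>distinct_partitions n. (-1)^(size T - 1) * F (Min (set_mset T)))"
  proof (rule sum.cong)
    fix T assume T: "T \<in> distinct_partitions n"
    then have p: "pos T" "sum_mset T = n" unfolding distinct_partitions_def pos_partitions by auto
    have ne: "T \<noteq> {#}" using p(2) assms by auto
    have "Min (set_mset T) \<in># T" using ne by (simp add: Min_in)
    then have "Min (set_mset T) > 0" using p(1) unfolding pos_def by blast
    then show "(-1) ^ (num_parts T - 1) * npow (smallest_part T) k = (-1)^(size T - 1) * F (Min (set_mset T))"
      unfolding F_def num_parts_def smallest_part_def by simp
  qed simp
  have fix_eq: "(\<Sum>x\<in>{x\<in>Q n. fst x \<noteq> {#} \<and> cand (fst x) (snd x) = {}}. g x)
       = (\<Sum>T\<in>distinct_partitions n. (-1)^(size T - 1) * F (Min (set_mset T)))"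
    unfolding g_def by (rule fixed_sum[OF assms])
  have inv0: "(\<Sum>x\<in>Q n \<inter> X. g x) = 0"
  proof -
    have "Q n \<inter> X = {x\<in>Q n. fst x \<noteq> {#} \<and> cand (fst x) (snd x) \<noteq> {}}" unfolding X_def by blast
    then show ?thesis unfolding g_def using involution_sum by simp
  qed
  have rest: "(\<Sum>x\<in>Q n - X. g x) = (\<Sum>x\<in>{x\<in>Q n. fst x \<noteq> {#} \<and> cand (fst x) (snd x) = {}}. g x)"
  proof (rule sum.mono_neutral_right)
    show "finite (Q n - X)" using finite_Q by simp
    show "{x\<in>Q n. fst x \<noteq> {#} \<and> cand (fst x) (snd x) = {}} \<subseteq> Q n - X" unfolding X_def by blast
    show "\<forall>i\<in>Q n - X - {x\<in>Q n. fst x \<noteq> {#} \<and> cand (fst x) (snd x) = {}}. g i = 0"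
    proof
      fix x assume "x \<in> Q n - X - {x\<in>Q n. fst x \<noteq> {#} \<and> cand (fst x) (snd x) = {}}"
      then have "fst x = {#}" unfolding X_def by blast
      then show "g x = 0" unfolding g_def F_def by simp
    qed
  qed
  have Qsum: "(\<Sum>x\<in>Q n. g x) = (\<Sum>T\<in>distinct_partitions n. (-1)^(size T - 1) * F (Min (set_mset T)))"
    using sum.Int_Diff[OF finite_Q, where g=g and B=X] inv0 rest fix_eq by simp
  have R1: "(\<Sum>p\<in>partitions n. \<Sum>j=0..num_distinct_parts p.
            (-1) ^ j * of_nat (num_distinct_parts p choose j) *
            (if int (largest_part p) - int j = 0 then 0
             else npow (nat (int (largest_part p) - int j)) k))
        = (\<Sum>p\<in>partitions n. W F (lp p) (card (set_mset p)))"
  proof (rule sum.cong)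
    fix p assume "p \<in> partitions n"
    then have p: "pos p" "sum_mset p = n" unfolding pos_partitions by auto
    have ne: "p \<noteq> {#}" using p(2) assms by auto
    have lpe: "largest_part p = lp p" by (rule lp_largest[OF ne])
    have cle: "card (set_mset p) \<le> lp p" by (rule card_set_le_lp[OF p(1)])
    show "(\<Sum>j=0..num_distinct_parts p.
            (-1) ^ j * of_nat (num_distinct_parts p choose j) *
            (if int (largest_part p) - int j = 0 then 0
             else npow (nat (int (largest_part p) - int j)) k)) = W F (lp p) (card (set_mset p))"
      unfolding W_def num_distinct_parts_def lpe
    proof (rule sum.cong)
      fix j assume "j \<in> {0..card (set_mset p)}"
      then have j: "j \<le> lp p" using cle by simp
      have "(int (lp p) - int j = 0) = (lp p - j = 0)" using j by simp
      moreover have "nat (int (lp p) - int j) = lp p - j" using j by simp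
      ultimately show "(-1) ^ j * of_nat (card (set_mset p) choose j) *
            (if int (lp p) - int j = 0 then 0 else npow (nat (int (lp p) - int j)) k)
            = of_nat (card (set_mset p) choose j) * ((-1)^j * F (lp p - j))"
        unfolding F_def by simp
    qed simp
  qed simp
  have R2: "(\<Sum>p\<in>partitions n. W F (lp p) (card (set_mset p)))
      = (\<Sum>p\<in>partitions n. \<Sum>S\<in>Pow (set_mset p). (-1)^card S * F (size p - card S))"
    unfolding step_conj1[where F=F and n=n] by (rule sum.cong[OF refl], rule W_subsets)
  have R3: "(\<Sum>p\<in>partitions n. \<Sum>S\<in>Pow (set_mset p). (-1)^card S * F (size p - card S))
      = (\<Sum>x\<in>Q n. g x)"
    using step_split[where F=F and n=n] step_conj2[where F=F and n=n]
    unfolding g_def by (simp add: case_prod_beta)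
  show ?thesis using L Qsum R1 R2 R3 by simp
qed

end
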